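(* Let $\Gamma$ be a $g\mathbf{PAI}$-theory. For all formulas $\varphi,\psi$: $[N(\varphi)]_{\sim_\Gamma}\le_\oplus[N(\psi)]_{\sim_\Gamma}$ in the quotient algebra $\langle N[Fm]/{\sim_\Gamma},\oplus\rangle$ if and only if $N(\varphi)\le_\Gamma N(\psi)$ (equivalently, iff $\varphi\prec\psi\in\Gamma$).
   Context: Language: fix a countable set $Var$ of variables; $Fm$ is the set of formulas built from $Var$ with unary $\neg,\Box$ and binary $\vee,\to$. Abbreviations: $\varphi\wedge\psi:=\neg(\neg\varphi\vee\neg\psi)$, $\varphi\supset\psi:=\neg\varphi\vee\psi$, $\varphi\equiv\psi:=(\varphi\supset\psi)\wedge(\psi\supset\varphi)$, $\varphi\prec\psi:=\psi\to(\varphi\vee\neg\varphi)$. $g\mathbf{PAI}$ is the Hilbert calculus with axiom schemes (A1) $\varphi\supset(\psi\supset\varphi)$; (A2) $(\varphi\supset(\psi\supset\chi))\supset((\varphi\supset\psi)\supset(\varphi\supset\chi))$; (A3) $(\neg\varphi\supset\neg\psi)\supset(\psi\supset\varphi)$; (A4) $(\varphi\to\psi)\equiv(\Box(\varphi\supset\psi)\wedge(\psi\prec\varphi))$; (A5) $((\varphi\to\psi)\prec(\varphi\vee\psi))\wedge((\varphi\vee\psi)\prec(\varphi\to\psi))$; (K) $\Box(\varphi\supset\psi)\supset(\Box\varphi\supset\Box\psi)$; (T) $\Box\varphi\supset\varphi$; (4) $\Box\varphi\supset\Box\Box\varphi$; (O1) $\varphi\prec\varphi$; (O2) $((\varphi\prec\psi)\wedge(\psi\prec\chi))\supset(\varphi\prec\chi)$;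 (O3) $(\varphi\prec\psi)\supset((\varphi\vee\psi)\prec\psi)$; (O4) $((\varphi\prec\psi)\equiv(\varphi\prec\neg\psi))\wedge((\varphi\prec\psi)\equiv(\neg\varphi\prec\psi))$; (O5) $((\varphi\prec\psi)\equiv(\varphi\prec\Box\psi))\wedge((\varphi\prec\psi)\equiv(\Box\varphi\prec\psi))$; (C1) $(\varphi\prec(\varphi\vee\psi))\wedge(\psi\prec(\varphi\vee\psi))$; (C2) $((\varphi\prec\chi)\wedge(\psi\prec\chi))\supset((\varphi\vee\psi)\prec\chi)$; (C3) $((\varphi\prec\chi)\wedge(\chi\prec\varphi)\wedge(\psi\prec\zeta)\wedge(\zeta\prec\psi))\supset((\varphi\to\psi)\prec(\chi\to\zeta))$; rules (MP) from $\varphi,\varphi\supset\psi$ infer $\psi$, (Nec$_g$) from $\varphi$ infer $\Box\varphi$. A $g\mathbf{PAI}$-theory is a set of formulas closed under derivability in this calculus. $N$ is the map from $Fm$ onto the algebra of terms over $Var$ in a binary symbol $\oplus$ given by $N(p)=p$, $N(\neg\varphi)=N(\Box\varphi)=N(\varphi)$, $N(\varphi\vee\psi)=N(\varphi\to\psi)=N(\varphi)\oplus N(\psi)$; $N[Fm]$ is its image. For a theory $\Gamma$ define on $N[Fm]$: $N(\varphi)\le_\Gamma N(\psi)$ iff $\varphi\prec\psi\in\Gamma$ (independent of the chosen preimages), and $N(\varphi)\sim_\Gamma N(\psi)$ iff $N(\varphi)\le_\Gamma N(\psi)$ and $N(\psi)\le_\Gamma N(\varphi)$; $\sim_\Gamma$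 is a congruence of $\langle N[Fm],\oplus\rangle$ and $\langle N[Fm]/{\sim_\Gamma},\oplus\rangle$ is the quotient. On the quotient, $x\le_\oplus y$ iff $x\oplus y=y$. *)

theory Defs
  imports Main
begin

text \<open>Formulas over a countable set of variables (here: nat), with unary
  negation and box, binary disjunction and the strict implication arrow.\<close>

datatype fm = Var nat | Neg fm | Box fm | Disj fm fm | Arr fm fm

definition Conj :: "fm \<Rightarrow> fm \<Rightarrow> fm" where
  "Conj a b = Neg (Disj (Neg a) (Neg b))"
definition Imp :: "fm \<Rightarrow> fm \<Rightarrow> fm" where
  "Imp a b = Disj (Neg a) b"
definition Equiv :: "fm \<Rightarrow> fm \<Rightarrow> fm" where
  "Equiv a b = Conj (Imp a b) (Imp b a)"
definition Prec :: "fm \<Rightarrow> fm \<Rightarrow> fm" where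
  "Prec a b = Arr b (Disj a (Neg a))"

inductive gPAI_ax :: "fm \<Rightarrow> bool" where
  A1: "gPAI_ax (Imp a (Imp b a))"
| A2: "gPAI_ax (Imp (Imp a (Imp b c)) (Imp (Imp a b) (Imp a c)))"
| A3: "gPAI_ax (Imp (Imp (Neg a) (Neg b)) (Imp b a))"
| A4: "gPAI_ax (Equiv (Arr a b) (Conj (Box (Imp a b)) (Prec b a)))"
| A5: "gPAI_ax (Conj (Prec (Arr a b) (Disj a b)) (Prec (Disj a b) (Arr a b)))"
| K: "gPAI_ax (Imp (Box (Imp a b)) (Imp (Box a) (Box b)))"
| T: "gPAI_ax (Imp (Box a) a)"
| Four: "gPAI_ax (Imp (Box a) (Box (Box a)))"
| O1: "gPAI_ax (Prec a a)"
| O2: "gPAI_ax (Imp (Conj (Prec a b) (Prec b c)) (Prec a c))"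
| O3: "gPAI_ax (Imp (Prec a b) (Prec (Disj a b) b))"
| O4: "gPAI_ax (Conj (Equiv (Prec a b) (Prec a (Neg b))) (Equiv (Prec a b) (Prec (Neg a) b)))"
| O5: "gPAI_ax (Conj (Equiv (Prec a b) (Prec a (Box b))) (Equiv (Prec a b) (Prec (Box a) b)))"
| C1: "gPAI_ax (Conj (Prec a (Disj a b)) (Prec b (Disj a b)))"
| C2: "gPAI_ax (Imp (Conj (Prec a c) (Prec b c)) (Prec (Disj a b) c))"
| C3: "gPAI_ax (Imp (Conj (Conj (Conj (Prec a c) (Prec c a)) (Prec b d)) (Prec d b))
                    (Prec (Arr a b) (Arr c d)))"

inductive gPAI_derives :: "fm set \<Rightarrow> fm \<Rightarrow> bool" where
  hyp: "a \<in> G \<Longrightarrow> gPAI_derives G a"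
| ax: "gPAI_ax a \<Longrightarrow> gPAI_derives G a"
| MP: "gPAI_derives G a \<Longrightarrow> gPAI_derives G (Imp a b) \<Longrightarrow> gPAI_derives G b"
| Nec: "gPAI_derives G a \<Longrightarrow> gPAI_derives G (Box a)"

definition gPAI_theory :: "fm set \<Rightarrow> bool" where
  "gPAI_theory G \<longleftrightarrow> (\<forall>a. gPAI_derives G a \<longrightarrow> a \<in> G)"

datatype trm = TVar nat | Oplus trm trm

fun N :: "fm \<Rightarrow> trm" where
  "N (Var p) = TVar p"
| "N (Neg a) = N a"
| "N (Box a) = N a"
| "N (Disj a b) = Oplus (N a) (N b)"
| "N (Arr a b) = Oplus (N a) (N b)"

definition NFm :: "trm set" where
  "NFm = range N"

text \<open>The preorder \<le>_\<Gamma> on N[Fm] (defined through preimages; the choice of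
  preimages is irrelevant by the paper's lemma) and the equivalence \<sim>_\<Gamma>.\<close>

definition le_G :: "fm set \<Rightarrow> trm \<Rightarrow> trm \<Rightarrow> bool" where
  "le_G G s t \<longleftrightarrow> (\<exists>a b. N a = s \<and> N b = t \<and> Prec a b \<in> G)"

definition sim_G :: "fm set \<Rightarrow> trm \<Rightarrow> trm \<Rightarrow> bool" where
  "sim_G G s t \<longleftrightarrow> le_G G s t \<and> le_G G t s"

definition cls :: "fm set \<Rightarrow> trm \<Rightarrow> trm set" where
  "cls G t = {s \<in> NFm. sim_G G s t}"

text \<open>The quotient operation: [s] \<oplus> [t] = [s \<oplus> t] (well defined since
  \<sim>_\<Gamma> is a congruence); implemented via representatives.\<close>

definition q_oplus :: "fm set \<Rightarrow> trm set \<Rightarrow> trm set \<Rightarrow> trm set" where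
  "q_oplus G X Y = cls G (Oplus (SOME s. s \<in> X) (SOME t. t \<in> Y))"

definition q_le :: "fm set \<Rightarrow> trm set \<Rightarrow> trm set \<Rightarrow> bool" where
  "q_le G X Y \<longleftrightarrow> q_oplus G X Y = Y"

end

theory Submission
  imports Defs
begin

inductive pd :: "fm set \<Rightarrow> fm \<Rightarrow> bool" where
  phyp: "a \<in> H \<Longrightarrow> pd H a"
| pax: "gPAI_ax a \<Longrightarrow> pd H a"
| pmp: "pd H a \<Longrightarrow> pd H (Imp a b) \<Longrightarrow> pd H b"

lemma pd_mono: "pd H X \<Longrightarrow> H \<subseteq> H' \<Longrightarrow> pd H' X"
  by (induction rule: pd.induct) (auto intro: pd.intros)

lemma pd_ins: "pd H X \<Longrightarrow> pd (insert z H) X"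
  using pd_mono by blast

lemma pd_id: "pd H (Imp a a)"
proof -
  have 1: "pd H (Imp (Imp a (Imp (Imp a a) a)) (Imp (Imp a (Imp a a)) (Imp a a)))"
    by (rule pax) (rule A2)
  have 2: "pd H (Imp a (Imp (Imp a a) a))" by (rule pax) (rule A1)
  have 3: "pd H (Imp a (Imp a a))" by (rule pax) (rule A1)
  show ?thesis using pmp[OF 3 pmp[OF 2 1]] .
qed

lemma ded: "pd (insert A H) B \<Longrightarrow> pd H (Imp A B)"
proof (induction "insert A H" B rule: pd.induct)
  case (phyp a)
  then show ?case
  proof (cases "a = A")
    case True then show ?thesis using pd_id by simp
  next
    case False
    then have "pd H a" using phyp by (auto intro: pd.intros)
    then show ?thesis using pd.pmp pd.pax[OF A1] by blast
  qed
next
  case (pax a)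
  then show ?case using pd.pmp pd.pax[OF A1] pd.pax by blast
next
  case (pmp a b)
  have "pd H (Imp (Imp A (Imp a b)) (Imp (Imp A a) (Imp A b)))" by (rule pax) (rule A2)
  then show ?case using pmp pd.pmp by blast
qed

lemma R_efq: "pd H (Neg a) \<Longrightarrow> pd H a \<Longrightarrow> pd H b"
proof -
  assume h1: "pd H (Neg a)" and h2: "pd H a"
  have "pd H (Imp (Neg a) (Imp (Neg b) (Neg a)))" by (rule pax) (rule A1)
  then have "pd H (Imp (Neg b) (Neg a))" using h1 pmp by blast
  moreover have "pd H (Imp (Imp (Neg b) (Neg a)) (Imp a b))" by (rule pax) (rule A3)
  ultimately have "pd H (Imp a b)" using pmp by blast
  then show ?thesis using h2 pmp by blast
qed

lemma R_nn: "pd H (Neg (Neg a)) \<Longrightarrow> pd H a"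
proof -
  assume h: "pd H (Neg (Neg a))"
  have "pd H (Imp (Neg (Neg a)) (Imp (Neg (Neg (Neg (Neg a)))) (Neg (Neg a))))" by (rule pax) (rule A1)
  then have "pd H (Imp (Neg (Neg (Neg (Neg a)))) (Neg (Neg a)))" using h pmp by blast
  moreover have "pd H (Imp (Imp (Neg (Neg (Neg (Neg a)))) (Neg (Neg a))) (Imp (Neg a) (Neg (Neg (Neg a)))))"
    by (rule pax) (rule A3)
  ultimately have "pd H (Imp (Neg a) (Neg (Neg (Neg a))))" using pmp by blast
  moreover have "pd H (Imp (Imp (Neg a) (Neg (Neg (Neg a)))) (Imp (Neg (Neg a)) a))"
    by (rule pax) (rule A3)
  ultimately have "pd H (Imp (Neg (Neg a)) a)" using pmp by blast
  then show ?thesis using h pmp by blast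
qed

lemma R_in: "pd H a \<Longrightarrow> pd H (Neg (Neg a))"
proof -
  assume h: "pd H a"
  have "pd H (Imp (Neg (Neg (Neg a))) (Neg a))"
    by (rule ded, rule R_nn, rule phyp) simp
  moreover have "pd H (Imp (Imp (Neg (Neg (Neg a))) (Neg a)) (Imp a (Neg (Neg a))))"
    by (rule pax) (rule A3)
  ultimately show ?thesis using h pmp by blast
qed

lemma R_contra: "pd H (Imp x y) \<Longrightarrow> pd H (Imp (Neg y) (Neg x))"
proof -
  assume h: "pd H (Imp x y)"
  have "pd H (Imp (Neg (Neg x)) (Neg (Neg y)))"
  proof (rule ded, rule R_in)
    have a: "pd (insert (Neg (Neg x)) H) x" by (rule R_nn, rule phyp) simp
    show "pd (insert (Neg (Neg x)) H) y" using pmp[OF a pd_ins[OF h]] .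
  qed
  moreover have "pd H (Imp (Imp (Neg (Neg x)) (Neg (Neg y))) (Imp (Neg y) (Neg x)))"
    by (rule pax) (rule A3)
  ultimately show ?thesis using pmp by blast
qed

lemma R_conjE1: "pd H (Conj a b) \<Longrightarrow> pd H a"
proof -
  assume h: "pd H (Conj a b)"
  have "pd H (Imp (Neg a) (Imp a (Neg b)))"
    by (rule ded, rule ded, rule R_efq[of _ a]) (auto intro: phyp)
  then have "pd H (Imp (Neg (Imp a (Neg b))) (Neg (Neg a)))" by (rule R_contra)
  moreover have "pd H (Neg (Imp a (Neg b)))" using h by (simp add: Conj_def Imp_def)
  ultimately show ?thesis using pmp R_nn by blast
qed

lemma R_conjE2: "pd H (Conj a b) \<Longrightarrow> pd H b"
proof -
  assume h: "pd H (Conj a b)"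
  have "pd H (Imp (Neg b) (Imp a (Neg b)))" by (rule pax) (rule A1)
  then have "pd H (Imp (Neg (Imp a (Neg b))) (Neg (Neg b)))" by (rule R_contra)
  moreover have "pd H (Neg (Imp a (Neg b)))" using h by (simp add: Conj_def Imp_def)
  ultimately show ?thesis using pmp R_nn by blast
qed

lemma R_conjI: "pd H a \<Longrightarrow> pd H b \<Longrightarrow> pd H (Conj a b)"
proof -
  assume ha: "pd H a" and hb: "pd H b"
  have "pd H (Imp (Neg (Neg (Imp a (Neg b)))) (Neg b))"
  proof (rule ded)
    have "pd (insert (Neg (Neg (Imp a (Neg b)))) H) (Imp a (Neg b))" by (rule R_nn, rule phyp) simp
    then show "pd (insert (Neg (Neg (Imp a (Neg b)))) H) (Neg b)" using pd_ins[OF ha] pmp by blast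
  qed
  moreover have "pd H (Imp (Imp (Neg (Neg (Imp a (Neg b)))) (Neg b)) (Imp b (Neg (Imp a (Neg b)))))"
    by (rule pax) (rule A3)
  ultimately have "pd H (Neg (Imp a (Neg b)))" using hb pmp by blast
  then show ?thesis by (simp add: Conj_def Imp_def)
qed

lemma pd_der: "pd H X \<Longrightarrow> gPAI_derives H X"
  by (induction rule: pd.induct) (auto intro: gPAI_derives.intros)

context
  fixes G :: "fm set"
  assumes th: "gPAI_theory G"
begin

lemma inG: "pd G X \<Longrightarrow> X \<in> G"
  using th pd_der unfolding gPAI_theory_def by blast

lemma axG: "gPAI_ax a \<Longrightarrow> a \<in> G"
  by (rule inG, rule pax)

lemma mpG: "a \<in> G \<Longrightarrow> Imp a b \<in> G \<Longrightarrow> b \<in> G"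
  by (rule inG, rule pmp[of _ a]) (auto intro: phyp)

lemma conjG: "Conj a b \<in> G \<longleftrightarrow> a \<in> G \<and> b \<in> G"
  by (meson R_conjE1 R_conjE2 R_conjI inG phyp)

lemma equivG: "Equiv a b \<in> G \<Longrightarrow> (a \<in> G \<longleftrightarrow> b \<in> G)"
  unfolding Equiv_def using conjG mpG by blast

lemma reflG: "Prec a a \<in> G" by (rule axG) (rule O1)

lemma transG: "Prec a b \<in> G \<Longrightarrow> Prec b c \<in> G \<Longrightarrow> Prec a c \<in> G"
  using mpG[OF _ axG[OF O2]] conjG by blast

lemma negL: "Prec (Neg a) b \<in> G \<longleftrightarrow> Prec a b \<in> G"
  using axG[OF O4, of a b] conjG equivG by blast
lemma negR: "Prec a (Neg b) \<in> G \<longleftrightarrow> Prec a b \<in> G"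
  using axG[OF O4, of a b] conjG equivG by blast
lemma boxL: "Prec (Box a) b \<in> G \<longleftrightarrow> Prec a b \<in> G"
  using axG[OF O5, of a b] conjG equivG by blast
lemma boxR: "Prec a (Box b) \<in> G \<longleftrightarrow> Prec a b \<in> G"
  using axG[OF O5, of a b] conjG equivG by blast

lemma c1a: "Prec a (Disj a b) \<in> G" using axG[OF C1, of a b] conjG by blast
lemma c1b: "Prec b (Disj a b) \<in> G" using axG[OF C1, of a b] conjG by blast
lemma c2: "Prec a c \<in> G \<Longrightarrow> Prec b c \<in> G \<Longrightarrow> Prec (Disj a b) c \<in> G"
  using mpG[OF _ axG[OF C2]] conjG by blast
lemma o3: "Prec a b \<in> G \<Longrightarrow> Prec (Disj a b) b \<in> G"
  using mpG[OF _ axG[OF O3]] by blast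
lemma a5a: "Prec (Arr a b) (Disj a b) \<in> G" using axG[OF A5, of a b] conjG by blast
lemma a5b: "Prec (Disj a b) (Arr a b) \<in> G" using axG[OF A5, of a b] conjG by blast

lemma disj_mono: "Prec a c \<in> G \<Longrightarrow> Prec b d \<in> G \<Longrightarrow> Prec (Disj a b) (Disj c d) \<in> G"
  by (meson c1a c1b c2 transG)

fun T :: "trm \<Rightarrow> fm" where
  "T (TVar p) = Var p"
| "T (Oplus s t) = Disj (T s) (T t)"

lemma NT: "N (T s) = s" by (induction s) auto

lemma toT: "Prec a (T (N a)) \<in> G \<and> Prec (T (N a)) a \<in> G"
proof (induction a)
  case (Var x) then show ?case using reflG by simp
next
  case (Neg a) then show ?case using negL negR by simp
next
  case (Box a) then show ?case using boxL boxR by simp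
next
  case (Disj a1 a2) then show ?case using disj_mono by simp
next
  case (Arr a1 a2) then show ?case using disj_mono a5a a5b transG by simp meson
qed

lemma sameN: "N a = N b \<Longrightarrow> Prec a b \<in> G"
  using toT[of a] toT[of b] transG by metis

lemma leN: "le_G G (N a) (N b) \<longleftrightarrow> Prec a b \<in> G"
  unfolding le_G_def by (metis sameN transG)

lemma simT: "sim_G G s t \<longleftrightarrow> Prec (T s) (T t) \<in> G \<and> Prec (T t) (T s) \<in> G"
  unfolding sim_G_def by (metis leN NT)

lemma NFm_UNIV: "NFm = UNIV"
  unfolding NFm_def using NT by (metis surjI)

lemma cls_eq: "cls G s = cls G t \<longleftrightarrow> sim_G G s t"
proof
  assume "cls G s = cls G t"
  moreover have "s \<in> cls G s" unfolding cls_def NFm_UNIV simT using reflG by simp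
  ultimately show "sim_G G s t" unfolding cls_def by auto
next
  assume "sim_G G s t"
  then show "cls G s = cls G t" unfolding cls_def NFm_UNIV simT using transG by blast
qed

lemma q_oplus_cls: "q_oplus G (cls G s) (cls G t) = cls G (Oplus s t)"
proof -
  have ne: "\<And>u. \<exists>x. x \<in> cls G u" unfolding cls_def NFm_UNIV simT using reflG by blast
  define s0 where "s0 = (SOME x. x \<in> cls G s)"
  define t0 where "t0 = (SOME x. x \<in> cls G t)"
  have "s0 \<in> cls G s" unfolding s0_def using ne someI_ex by metis
  then have s0: "sim_G G s0 s" unfolding cls_def by simp
  have "t0 \<in> cls G t" unfolding t0_def using ne someI_ex by metis
  then have t0: "sim_G G t0 t" unfolding cls_def by simp
  have "sim_G G (Oplus s0 t0) (Oplus s t)"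
    using s0 t0 unfolding simT by (simp add: disj_mono)
  then show ?thesis unfolding q_oplus_def s0_def[symmetric] t0_def[symmetric] cls_eq .
qed

end

theorem mainTheorem12:
  assumes "gPAI_theory \<Gamma>"
  shows "(q_le \<Gamma> (cls \<Gamma> (N \<phi>)) (cls \<Gamma> (N \<psi>)) \<longleftrightarrow> le_G \<Gamma> (N \<phi>) (N \<psi>))
       \<and> (q_le \<Gamma> (cls \<Gamma> (N \<phi>)) (cls \<Gamma> (N \<psi>)) \<longleftrightarrow> Prec \<phi> \<psi> \<in> \<Gamma>)"
proof -
  note th = assms
  have "q_le \<Gamma> (cls \<Gamma> (N \<phi>)) (cls \<Gamma> (N \<psi>)) \<longleftrightarrow> sim_G \<Gamma> (N (Disj \<phi> \<psi>)) (N \<psi>)"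
    unfolding q_le_def q_oplus_cls[OF th] cls_eq[OF th] by simp
  also have "\<dots> \<longleftrightarrow> Prec (Disj \<phi> \<psi>) \<psi> \<in> \<Gamma> \<and> Prec \<psi> (Disj \<phi> \<psi>) \<in> \<Gamma>"
    unfolding sim_G_def leN[OF th] ..
  also have "\<dots> \<longleftrightarrow> Prec \<phi> \<psi> \<in> \<Gamma>"
    using c1a[OF th] c1b[OF th] o3[OF th] transG[OF th] by blast
  finally show ?thesis using leN[OF th] by simp
qed

end
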